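(* Let $C$ be a circle in the plane and let $E$ be an ellipse lying in the interior of the disk bounded by $C$, such that $E$ is a Poncelet $3$-ellipse for $C$, and such that the center of $E$ coincides with the center of $C$. For each triangle that is inscribed in $C$ (all three vertices on $C$) and circumscribes $E$ (each side tangent to $E$), form three circles: for each side of the triangle, the circle centered at the midpoint of that side and passing through the vertex of the triangle opposite to that side. Then the sum of the areas of these three circles is the same for every such triangle; that is, it depends only on the pair $(E, C)$.
   Context: An ellipse $E$ in the interior of a circle $C$ is called a Poncelet $3$-ellipse (for $C$) if there exists a triangle inscribed in $C$ whose three sides are tangent to $E$; by Poncelet's closure theorem, every point of $C$ is then a vertex of such a triangle (these triangles are called Poncelet triangles). *)

theory Defs
  imports "HOL-Analysis.Analysis"
begin

definition ellipse_curve :: "complex \<Rightarrow> real \<Rightarrow> real \<Rightarrow> real \<Rightarrow> complex set" where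
  "ellipse_curve c a b th =
     {c + cis th * Complex (a * cos t) (b * sin t) | t. True}"

definition line_through :: "complex \<Rightarrow> complex \<Rightarrow> complex set" where
  "line_through p q = {p + of_real s * (q - p) | s. True}"

definition tangent_to :: "complex set \<Rightarrow> complex \<Rightarrow> complex \<Rightarrow> bool" where
  "tangent_to E p q \<longleftrightarrow> (\<exists>!x. x \<in> line_through p q \<and> x \<in> E)"

definition poncelet_triangle ::
  "complex set \<Rightarrow> complex \<Rightarrow> real \<Rightarrow> complex \<Rightarrow> complex \<Rightarrow> complex \<Rightarrow> bool" where
  "poncelet_triangle E c R A B C \<longleftrightarrow>
     A \<in> sphere c R \<and> B \<in> sphere c R \<and> C \<in> sphere c R \<and>
     A \<noteq> B \<and> B \<noteq> C \<and> C \<noteq> A \<and>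
     tangent_to E A B \<and> tangent_to E B C \<and> tangent_to E C A"

definition poncelet3 :: "complex set \<Rightarrow> complex \<Rightarrow> real \<Rightarrow> bool" where
  "poncelet3 E c R \<longleftrightarrow> E \<subseteq> ball c R \<and> (\<exists>A B C. poncelet_triangle E c R A B C)"

definition median_circles_area :: "complex \<Rightarrow> complex \<Rightarrow> complex \<Rightarrow> real" where
  "median_circles_area A B C =
     pi * (cmod ((B + C) / 2 - A))\<^sup>2 + pi * (cmod ((C + A) / 2 - B))\<^sup>2
     + pi * (cmod ((A + B) / 2 - C))\<^sup>2"

end

theory Submission
  imports Defs
begin

definition nrm :: "complex \<Rightarrow> real \<Rightarrow> complex \<Rightarrow> complex" where
  "nrm c th x = cnj (cis th) * (x - c)"

lemma nrm_inv: "x = c + cis th * nrm c th x"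
proof -
  have "cis th * cnj (cis th) = 1" by (simp add: cis_cnj cis_mult)
  then show ?thesis unfolding nrm_def by (simp add: algebra_simps)
qed

lemma ell_char:
  assumes "a > 0" "b > 0"
  shows "x \<in> ellipse_curve c a b th \<longleftrightarrow>
     b^2 * (Re (nrm c th x))^2 + a^2 * (Im (nrm c th x))^2 = a^2 * b^2"
proof
  assume "x \<in> ellipse_curve c a b th"
  then obtain t where t: "x = c + cis th * Complex (a * cos t) (b * sin t)"
    unfolding ellipse_curve_def by blast
  have "cnj (cis th) * cis th = 1" by (simp add: cis_cnj cis_mult)
  then have "nrm c th x = Complex (a * cos t) (b * sin t)"
    unfolding nrm_def t by (simp add: mult.assoc[symmetric])
  then have "b^2 * (Re (nrm c th x))^2 + a^2 * (Im (nrm c th x))^2 = b^2 * (a * cos t)^2 + a^2 * (b * sin t)^2"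
    by simp
  also have "\<dots> = a^2 * b^2 * ((cos t)^2 + (sin t)^2)" by algebra
  also have "\<dots> = a^2 * b^2" by simp
  finally show "b^2 * (Re (nrm c th x))^2 + a^2 * (Im (nrm c th x))^2 = a^2 * b^2" .
next
  assume h: "b^2 * (Re (nrm c th x))^2 + a^2 * (Im (nrm c th x))^2 = a^2 * b^2"
  define X where "X = Re (nrm c th x)"
  define Y where "Y = Im (nrm c th x)"
  have "(X / a)^2 + (Y / b)^2 = (b^2 * X^2 + a^2 * Y^2) / (a^2 * b^2)"
    using assms by (simp add: power_divide field_simps)
  also have "\<dots> = 1" using h assms unfolding X_def Y_def by simp
  finally obtain t where t: "X / a = cos t" "Y / b = sin t"
    using sincos_total_2pi by metis
  have "a * cos t = X" using t(1) assms by (simp add: field_simps)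
  moreover have "b * sin t = Y" using t(2) assms by (simp add: field_simps)
  ultimately have "nrm c th x = Complex (a * cos t) (b * sin t)"
    unfolding X_def Y_def by (simp add: complex_eq_iff)
  then have "x = c + cis th * Complex (a * cos t) (b * sin t)" using nrm_inv by metis
  then show "x \<in> ellipse_curve c a b th" unfolding ellipse_curve_def by blast
qed

lemma nrm_line: "nrm c th (P + of_real s * (Q - P)) = nrm c th P + of_real s * (nrm c th Q - nrm c th P)"
  unfolding nrm_def by (simp add: algebra_simps)

lemma nrm_inj: "nrm c th x = nrm c th y \<Longrightarrow> x = y"
  using nrm_inv by metis

lemma tangent_cond:
  assumes "a > 0" "b > 0" "P \<noteq> Q" "tangent_to (ellipse_curve c a b th) P Q"
  shows "b^2 * (Re (nrm c th Q) - Re (nrm c th P))^2 + a^2 * (Im (nrm c th Q) - Im (nrm c th P))^2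
       = (Re (nrm c th P) * Im (nrm c th Q) - Im (nrm c th P) * Re (nrm c th Q))^2"
proof -
  define p1 where "p1 = Re (nrm c th P)"
  define p2 where "p2 = Im (nrm c th P)"
  define d1 where "d1 = Re (nrm c th Q) - Re (nrm c th P)"
  define d2 where "d2 = Im (nrm c th Q) - Im (nrm c th P)"
  have pt: "P + of_real s * (Q - P) \<in> ellipse_curve c a b th \<longleftrightarrow>
     b^2 * (p1 + s*d1)^2 + a^2 * (p2 + s*d2)^2 = a^2 * b^2" for s
    unfolding ell_char[OF assms(1,2)] nrm_line p1_def p2_def d1_def d2_def by simp
  have dnz: "d1 \<noteq> 0 \<or> d2 \<noteq> 0"
  proof (rule ccontr)
    assume "\<not> ?thesis"
    then have "nrm c th Q = nrm c th P" unfolding d1_def d2_def by (simp add: complex_eq_iff)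
    then show False using nrm_inj assms(3) by metis
  qed
  define qa where "qa = b^2*d1^2 + a^2*d2^2"
  define qb where "qb = 2*(b^2*p1*d1 + a^2*p2*d2)"
  define qc where "qc = b^2*p1^2 + a^2*p2^2 - a^2*b^2"
  have alpos: "qa > 0"
  proof (cases "d1 = 0")
    case True
    then show ?thesis using dnz assms(1,2) unfolding qa_def by simp
  next
    case False
    have "b^2*d1^2 > 0" using False assms(2) by simp
    moreover have "a^2*d2^2 \<ge> 0" by simp
    ultimately show ?thesis unfolding qa_def by linarith
  qed
  have quadeq: "b^2 * (p1 + s*d1)^2 + a^2 * (p2 + s*d2)^2 - a^2 * b^2 = qa* s^2 + qb* s + qc" for s
    unfolding qa_def qb_def qc_def by (simp add: power2_eq_square algebra_simps)
  have quad: "P + of_real s * (Q - P) \<in> ellipse_curve c a b th \<longleftrightarrow> qa* s^2 + qb* s + qc = 0" for s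
    unfolding pt using quadeq[of s] by linarith
  from assms(4) obtain x where x: "x \<in> line_through P Q" "x \<in> ellipse_curve c a b th"
    and uq: "\<And>y. y \<in> line_through P Q \<Longrightarrow> y \<in> ellipse_curve c a b th \<Longrightarrow> y = x"
    unfolding tangent_to_def by blast
  from x(1) obtain s where s: "x = P + of_real s * (Q - P)" unfolding line_through_def by blast
  have qs: "qa* s^2 + qb* s + qc = 0" using quad x(2) s by simp
  define s' where "s' = - s - qb/qa"
  have als: "qa * s' = - qa* s - qb" unfolding s'_def using alpos by (simp add: field_simps)
  have "qa* s'^2 + qb* s' - (qa* s^2 + qb* s) = (qa* s' + qa* s + qb)*(s' - s)" by (simp add: power2_eq_square algebra_simps)
  then have qs': "qa* s'^2 + qb* s' + qc = 0" using als qs by simp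
  have "P + of_real s' * (Q - P) = x"
    using uq[of "P + of_real s' * (Q - P)"] quad qs' unfolding line_through_def by blast
  then have "of_real s' * (Q - P) = of_real s * (Q - P)" using s by simp
  then have "s' = s" using assms(3) by simp
  then have e1: "2*qa* s + qb = 0" using als by simp
  have "qb^2 - 4*qa*qc = (2*qa* s + qb)^2 - 4*qa*(qa* s^2 + qb* s + qc)" by (simp add: power2_eq_square algebra_simps)
  then have e2: "qb^2 - 4*qa*qc = 0" using e1 qs by simp
  have "4*(a^2*b^2*(qa - (p1*d2 - p2*d1)^2)) = qb^2 - 4*qa*qc"
    unfolding qa_def qb_def qc_def by (simp add: power2_eq_square algebra_simps)
  then have "a^2*b^2*(qa - (p1*d2 - p2*d1)^2) = 0" using e2 by simp
  then have e3: "qa = (p1*d2 - p2*d1)^2" using assms(1,2) by simp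
  have "p1*d2 - p2*d1 = Re (nrm c th P) * Im (nrm c th Q) - Im (nrm c th P) * Re (nrm c th Q)"
    unfolding p1_def p2_def d1_def d2_def by (simp add: algebra_simps)
  then show ?thesis using e3 unfolding qa_def d1_def d2_def by simp
qed

lemma pairA: fixes z1 z2 w1 w2 R c k :: complex
  assumes "z1 * w1 = 1" "z2 * w2 = 1" "R*(z1 * w2+w1 * z2) + c*(z1*z2+w1 * w2) = 2*k"
  shows "R*(z1^2+z2^2) + c*(z1^2*z2^2+1) - 2*k*z1*z2 = 0"
  using assms by algebra

lemma idt: fixes x1 y1 x2 y2 a b R :: real
  assumes "x1^2+y1^2=1" "x2^2+y2^2=1"
  shows "b^2*(x2-x1)^2+a^2*(y2-y1)^2 - R^2*(x1*y2-x2*y1)^2 = (1-x1*x2-y1*y2)*(a^2+b^2-R^2 - R^2*(x1*x2+y1*y2) - (b^2-a^2)*(x1*x2-y1*y2))"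
  using assms by algebra
lemma prodrel: fixes z1 z2 z3 R c k :: complex
  assumes "R*(z1^2+z2^2) + c*(z1^2*z2^2+1) - 2*k*z1*z2 = 0"
    "R*(z1^2+z3^2) + c*(z1^2*z3^2+1) - 2*k*z1*z3 = 0" "z2 \<noteq> z3"
  shows "(c*z1^2+R)*z2*z3 = R*z1^2+c"
proof -
  have "(z2 - z3)*((c*z1^2+R)*z2*z3 - (R*z1^2+c)) = 0"
    using assms(1,2) by algebra
  then show ?thesis using assms(3) by simp
qed
lemma final: fixes z1 z2 z3 R c :: complex
  assumes "(c*z1^2+R)*z2*z3 = R*z1^2+c" "(c*z2^2+R)*z1*z3 = R*z2^2+c" "z1 \<noteq> z2"
  shows "R*(z1+z2+z3) = c*(z1*z2*z3)"
proof -
  have "(z1 - z2)*(R*(z1+z2+z3) - c*(z1*z2*z3)) = 0"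
    using assms(1,2) by algebra
  then show ?thesis using assms(3) by simp
qed

lemma sum_medians:
  fixes p q r :: complex
  assumes "cmod p = R" "cmod q = R" "cmod r = R"
  shows "(cmod ((q + r)/2 - p))^2 + (cmod ((r + p)/2 - q))^2 + (cmod ((p + q)/2 - r))^2
     = (27 * R^2 - 3 * (cmod (p + q + r))^2) / 4"
proof -
  have h: "(Re p)^2 + (Im p)^2 = R^2" "(Re q)^2 + (Im q)^2 = R^2" "(Re r)^2 + (Im r)^2 = R^2"
    using assms by (simp_all add: cmod_power2[symmetric])
  show ?thesis unfolding cmod_power2 using h by (simp add: power2_eq_square field_simps)
qed

lemma pairG:
  fixes p q :: complex and R a b :: real
  assumes "R > 0" "cmod p = R" "cmod q = R" "p \<noteq> q"
    "b^2 * (Re q - Re p)^2 + a^2 * (Im q - Im p)^2 = (Re p * Im q - Im p * Re q)^2"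
  shows "R^2 * Re ((p / of_real R) * cnj (q / of_real R)) + (b^2 - a^2) * Re ((p / of_real R) * (q / of_real R)) = a^2 + b^2 - R^2"
proof -
  define x1 where "x1 = Re p / R"
  define y1 where "y1 = Im p / R"
  define x2 where "x2 = Re q / R"
  define y2 where "y2 = Im q / R"
  have rp: "Re p = R * x1" "Im p = R * y1" "Re q = R * x2" "Im q = R * y2"
    using assms(1) unfolding x1_def y1_def x2_def y2_def by simp_all
  have u1: "x1^2 + y1^2 = 1"
  proof -
    have "(Re p)^2 + (Im p)^2 = R^2" using assms(2) by (simp add: cmod_power2[symmetric])
    then have "R^2 * (x1^2 + y1^2) = R^2 * 1" unfolding rp by (simp add: power_mult_distrib algebra_simps)
    then show ?thesis using assms(1) by simp
  qed
  have u2: "x2^2 + y2^2 = 1"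
  proof -
    have "(Re q)^2 + (Im q)^2 = R^2" using assms(3) by (simp add: cmod_power2[symmetric])
    then have "R^2 * (x2^2 + y2^2) = R^2 * 1" unfolding rp by (simp add: power_mult_distrib algebra_simps)
    then show ?thesis using assms(1) by simp
  qed
  have "R^2 * (b^2*(x2-x1)^2+a^2*(y2-y1)^2) = R^2 * (R^2*(x1*y2-x2*y1)^2)"
    using assms(5) unfolding rp by (simp add: power2_eq_square algebra_simps)
  moreover have rnz: "R^2 \<noteq> 0" using assms(1) by simp
  ultimately have "b^2*(x2-x1)^2+a^2*(y2-y1)^2 = R^2*(x1*y2-x2*y1)^2" using mult_left_cancel[OF rnz] by blast
  then have t: "b^2*(x2-x1)^2+a^2*(y2-y1)^2 - R^2*(x1*y2-x2*y1)^2 = 0" by simp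
  have nz: "1 - x1*x2 - y1*y2 \<noteq> 0"
  proof
    assume "1 - x1*x2 - y1*y2 = 0"
    then have "(x1-x2)^2 + (y1-y2)^2 = 0" using u1 u2 by (simp add: power2_eq_square algebra_simps)
    then have "x1 = x2" "y1 = y2" by (simp_all add: sum_power2_eq_zero_iff)
    then have "p = q" using rp by (simp add: complex_eq_iff)
    then show False using assms(4) by simp
  qed
  have "(1-x1*x2-y1*y2)*(a^2+b^2-R^2 - R^2*(x1*x2+y1*y2) - (b^2-a^2)*(x1*x2-y1*y2)) = 0"
    using t idt[OF u1 u2, of b a R] by simp
  then have g: "R^2*(x1*x2+y1*y2) + (b^2-a^2)*(x1*x2-y1*y2) = a^2+b^2-R^2" using nz by simp
  have "Re ((p / of_real R) * cnj (q / of_real R)) = x1*x2+y1*y2"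
    unfolding x1_def y1_def x2_def y2_def by (simp add: field_simps power2_eq_square add_divide_distrib)
  moreover have "Re ((p / of_real R) * (q / of_real R)) = x1*x2-y1*y2"
    unfolding x1_def y1_def x2_def y2_def by (simp add: field_simps power2_eq_square add_divide_distrib diff_divide_distrib)
  ultimately show ?thesis using g by simp
qed

lemma pairC0:
  fixes w1 w2 :: complex and R c k :: real
  assumes "R^2 * Re w1 + c * Re w2 = k"
  shows "of_real (R^2) * (w1 + cnj w1) + of_real c * (w2 + cnj w2) = 2 * of_real k"
proof -
  have "of_real (R^2) * (w1 + cnj w1) + of_real c * (w2 + cnj w2) = of_real (2 * (R^2 * Re w1 + c * Re w2))"
    by (simp add: complex_add_cnj algebra_simps)
  then show ?thesis using assms by simp
qed

lemma pairC:
  fixes z1 z2 :: complex and R c k :: real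
  assumes "R^2 * Re (z1 * cnj z2) + c * Re (z1 * z2) = k"
  shows "of_real (R^2) * (z1 * cnj z2 + cnj z1 * z2) + of_real c * (z1 * z2 + cnj z1 * cnj z2) = 2 * of_real k"
  using pairC0[OF assms] by (simp only: complex_cnj_mult complex_cnj_cnj)

theorem theorem2p1:
  fixes c :: complex and R a b th :: real
  assumes "R > 0" and "a > 0" and "b > 0"
    and "ellipse_curve c a b th \<subseteq> ball c R"
    and "poncelet3 (ellipse_curve c a b th) c R"
  shows "\<exists>K. \<forall>A B C. poncelet_triangle (ellipse_curve c a b th) c R A B C
                 \<longrightarrow> median_circles_area A B C = K"
proof (rule exI[where x = "pi * ((27 * R^2 - 3 * (\<bar>b^2 - a^2\<bar> / R)^2) / 4)"], intro allI impI)
  fix A B C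
  assume pt: "poncelet_triangle (ellipse_curve c a b th) c R A B C"
  define pA where "pA = nrm c th A"
  define pB where "pB = nrm c th B"
  define pC where "pC = nrm c th C"
  have ptf: "A \<noteq> B" "B \<noteq> C" "C \<noteq> A"
    "tangent_to (ellipse_curve c a b th) A B" "tangent_to (ellipse_curve c a b th) B C"
    "tangent_to (ellipse_curve c a b th) C A"
    "A \<in> sphere c R" "B \<in> sphere c R" "C \<in> sphere c R"
    using pt unfolding poncelet_triangle_def by simp_all
  have nn: "cmod (nrm c th X) = R" if "X \<in> sphere c R" for X
    using that unfolding nrm_def by (simp add: norm_mult dist_norm norm_minus_commute)
  have nA: "cmod pA = R" unfolding pA_def using nn[OF ptf(7)] .
  have nB: "cmod pB = R" unfolding pB_def using nn[OF ptf(8)] .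
  have nC: "cmod pC = R" unfolding pC_def using nn[OF ptf(9)] .
  have dAB: "pA \<noteq> pB" using nrm_inj[of c th A B] ptf(1) unfolding pA_def pB_def by blast
  have dBC: "pB \<noteq> pC" using nrm_inj[of c th B C] ptf(2) unfolding pC_def pB_def by blast
  have dCA: "pC \<noteq> pA" using nrm_inj[of c th C A] ptf(3) unfolding pA_def pC_def by blast
  have tAB: "b^2 * (Re pB - Re pA)^2 + a^2 * (Im pB - Im pA)^2 = (Re pA * Im pB - Im pA * Re pB)^2"
    using tangent_cond[OF assms(2,3) ptf(1) ptf(4)] unfolding pA_def pB_def .
  have tBC: "b^2 * (Re pC - Re pB)^2 + a^2 * (Im pC - Im pB)^2 = (Re pB * Im pC - Im pB * Re pC)^2"
    using tangent_cond[OF assms(2,3) ptf(2) ptf(5)] unfolding pC_def pB_def .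
  have tCA: "b^2 * (Re pA - Re pC)^2 + a^2 * (Im pA - Im pC)^2 = (Re pC * Im pA - Im pC * Re pA)^2"
    using tangent_cond[OF assms(2,3) ptf(3) ptf(6)] unfolding pA_def pC_def .
  have sw: "b^2 * (Re q - Re p)^2 + a^2 * (Im q - Im p)^2 = (Re p * Im q - Im p * Re q)^2"
    if "b^2 * (Re p - Re q)^2 + a^2 * (Im p - Im q)^2 = (Re q * Im p - Im q * Re p)^2" for p q :: complex
    using that by (simp add: power2_eq_square algebra_simps)
  define z1 where "z1 = pA / of_real R"
  define z2 where "z2 = pB / of_real R"
  define z3 where "z3 = pC / of_real R"
  define k where "k = a^2 + b^2 - R^2"
  define cc where "cc = b^2 - a^2"
  have G12: "R^2 * Re (z1 * cnj z2) + cc * Re (z1 * z2) = k"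
    using pairG[OF assms(1) nA nB dAB tAB] unfolding z1_def z2_def k_def cc_def .
  have G13: "R^2 * Re (z1 * cnj z3) + cc * Re (z1 * z3) = k"
    using pairG[OF assms(1) nA nC dCA[symmetric] sw[OF tCA]] unfolding z1_def z3_def k_def cc_def .
  have G23: "R^2 * Re (z2 * cnj z3) + cc * Re (z2 * z3) = k"
    using pairG[OF assms(1) nB nC dBC tBC] unfolding z2_def z3_def k_def cc_def .
  have G21: "R^2 * Re (z2 * cnj z1) + cc * Re (z2 * z1) = k"
    using pairG[OF assms(1) nB nA dAB[symmetric] sw[OF tAB]] unfolding z1_def z2_def k_def cc_def .
  have un: "z * cnj z = 1" if "cmod z = 1" for z :: complex
  proof -
    have "z * cnj z = of_real ((cmod z)^2)" by (rule complex_norm_square[symmetric])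
    also have "\<dots> = 1" using that by simp
    finally show ?thesis .
  qed
  have n1: "cmod z1 = 1" "cmod z2 = 1" "cmod z3 = 1"
    using nA nB nC assms(1) unfolding z1_def z2_def z3_def by (simp_all add: norm_divide)
  have u1: "z1 * cnj z1 = 1" using un[OF n1(1)] .
  have u2: "z2 * cnj z2 = 1" using un[OF n1(2)] .
  have u3: "z3 * cnj z3 = 1" using un[OF n1(3)] .
  have d12: "z1 \<noteq> z2" using dAB assms(1) unfolding z1_def z2_def by simp
  have d23: "z2 \<noteq> z3" using dBC assms(1) unfolding z3_def z2_def by simp
  have d13: "z1 \<noteq> z3" using dCA assms(1) unfolding z1_def z3_def by auto
  have F12: "of_real (R^2)*(z1^2+z2^2) + of_real cc*(z1^2*z2^2+1) - 2 * of_real k*z1*z2 = 0"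
    using pairA[OF u1 u2 pairC[OF G12]] .
  have F13: "of_real (R^2)*(z1^2+z3^2) + of_real cc*(z1^2*z3^2+1) - 2 * of_real k*z1*z3 = 0"
    using pairA[OF u1 u3 pairC[OF G13]] .
  have F21: "of_real (R^2)*(z2^2+z1^2) + of_real cc*(z2^2*z1^2+1) - 2 * of_real k*z2*z1 = 0"
    using pairA[OF u2 u1 pairC[OF G21]] .
  have F23: "of_real (R^2)*(z2^2+z3^2) + of_real cc*(z2^2*z3^2+1) - 2 * of_real k*z2*z3 = 0"
    using pairA[OF u2 u3 pairC[OF G23]] .
  have P1: "(of_real cc*z1^2+ of_real (R^2))*z2*z3 = of_real (R^2)*z1^2+ of_real cc"
    using prodrel[OF F12 F13 d23] .
  have P2: "(of_real cc*z2^2+ of_real (R^2))*z1*z3 = of_real (R^2)*z2^2+ of_real cc"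
    using prodrel[OF F21 F23 d13] .
  have fin: "of_real (R^2)*(z1+z2+z3) = of_real cc*(z1*z2*z3)"
    using final[OF P1 P2 d12] .
  have "R^2 * cmod (z1+z2+z3) = \<bar>cc\<bar>"
  proof -
    have "cmod (of_real (R^2) * (z1+z2+z3)) = cmod (of_real cc * (z1*z2*z3))" using fin by simp
    moreover have "cmod (of_real (R^2) * (z1+z2+z3)) = R^2 * cmod (z1+z2+z3)"
      by (simp only: norm_mult norm_of_real abs_power2)
    moreover have "cmod (of_real cc * (z1*z2*z3)) = \<bar>cc\<bar>"
      using n1 by (simp only: norm_mult norm_of_real mult_1_right)
    ultimately show ?thesis by simp
  qed
  moreover have "pA + pB + pC = of_real R * (z1+z2+z3)"
    using assms(1) unfolding z1_def z2_def z3_def by (simp add: field_simps)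
  ultimately have "R * cmod (pA + pB + pC) = \<bar>cc\<bar>"
    using assms(1) by (simp add: norm_mult power2_eq_square)
  then have S: "cmod (pA + pB + pC) = \<bar>cc\<bar> / R" using assms(1) by (simp add: field_simps)
  have cc1: "cis th * cnj (cis th) = 1" by (simp add: cis_cnj cis_mult)
  have md: "(Y + Z)/2 - X = cis th * ((nrm c th Y + nrm c th Z)/2 - nrm c th X)" for X Y Z
  proof -
    have "cis th * ((nrm c th Y + nrm c th Z)/2 - nrm c th X)
        = (cis th * cnj (cis th)) * ((Y - c + (Z - c))/2 - (X - c))"
      unfolding nrm_def by (simp add: algebra_simps)
    also have "\<dots> = (Y - c + (Z - c))/2 - (X - c)" using cc1 by simp
    also have "\<dots> = (Y + Z)/2 - X" by (simp add: field_simps)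
    finally show ?thesis by simp
  qed
  have "median_circles_area A B C = pi * ((cmod ((pB + pC)/2 - pA))^2 + (cmod ((pC + pA)/2 - pB))^2 + (cmod ((pA + pB)/2 - pC))^2)"
  proof -
    have e1: "cmod ((B + C)/2 - A) = cmod ((pB + pC)/2 - pA)"
      using md[of B C A] unfolding pA_def pB_def pC_def by (simp add: norm_mult)
    have e2: "cmod ((C + A)/2 - B) = cmod ((pC + pA)/2 - pB)"
      using md[of C A B] unfolding pA_def pB_def pC_def by (simp add: norm_mult)
    have e3: "cmod ((A + B)/2 - C) = cmod ((pA + pB)/2 - pC)"
      using md[of A B C] unfolding pA_def pB_def pC_def by (simp add: norm_mult)
    show ?thesis unfolding median_circles_area_def e1 e2 e3 by (simp add: distrib_left)
  qed
  also have "\<dots> = pi * ((27 * R^2 - 3 * (\<bar>cc\<bar> / R)^2) / 4)"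
    using sum_medians[OF nA nB nC] S by simp
  finally show "median_circles_area A B C = pi * ((27 * R^2 - 3 * (\<bar>b^2 - a^2\<bar> / R)^2) / 4)"
    unfolding cc_def .
qed

end
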